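(* There exist constants $K$ and $M$ such that the following holds. Let $k\ge K$ be an integer and $a,b,b'\in(\frac1{10},10)$ with $b\le b'$. Let $u_1=\cos(ky)e^{-k\sqrt b\,t}$ and $u_2=\cos(ky)e^{-k\sqrt{b'}\,t}$, which solve respectively $\ddot u_1+\operatorname{div}\left[\begin{pmatrix}a&0\\0&b\end{pmatrix}\nabla u_1\right]=0$ and $\ddot u_2+\operatorname{div}\left[\begin{pmatrix}a&0\\0&b'\end{pmatrix}\nabla u_2\right]=0$. For every $t_1\ge0$ and $c_1>0$, with $c_2>0$ defined by $c_1e^{-k\sqrt b\,t_1}=c_2e^{-k\sqrt{b'}\,t_1}$, there exist a $C^2$ function $u$ and a $C^1$ real $2\times 2$ matrix function $A$ in the regularity class $R(80,10)$ with $\ddot u+\operatorname{div}(A\nabla u)=0$ on $\mathbb{T}^2\times\mathbb{R}$, such that $u=c_1u_1$, $A=\begin{pmatrix}a&0\\0&b\end{pmatrix}$ for $t\le t_1$, and $u=c_2u_2$, $A=\begin{pmatrix}a&0\\0&b'\end{pmatrix}$ for $t\ge t_1+400$. Moreover, for $t\in[t_1,t_1+400]$, $u=g(t)\cos(ky)$ with $g\in C^2$ and $|g^{(\alpha)}(t)|\le Mc_1k^\alpha e^{-k\sqrt b\,t}$ for $0\le\alpha\le2$.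
   Context: $\mathbb{T}^2=(\mathbb{R}/2\pi\mathbb{Z})^2$ with coordinates $(x,y)$; $t$ the third coordinate. $\ddot u+\operatorname{div}(A\nabla u)$ means $\partial_t^2u+\sum_{i,j\in\{x,y\}}\partial_i(A_{ij}\partial_ju)$. Regularity class $R(\Lambda,C)$: $\Lambda^{-1}|\xi|^2\le\xi^TA\xi\le\Lambda|\xi|^2$ for all $\xi\in\mathbb{R}^2$ at every point, and the entries of $A$ are $C^1$ with all first partial derivatives in $x,y,t$ bounded by $C$ in absolute value. *)

theory Defs
  imports "HOL-Analysis.Analysis"
begin

text \<open>Points of T^2 x R are represented as (x,y,t) :: real \<times> real \<times> real;
  functions on T^2 x R are functions on R^3 that are 2pi-periodic in x and y.\<close>

type_synonym pt = "real \<times> real \<times> real"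

definition ex :: pt where "ex = (1, 0, 0)"
definition ey :: pt where "ey = (0, 1, 0)"
definition et :: pt where "et = (0, 0, 1)"

definition pd :: "(pt \<Rightarrow> real) \<Rightarrow> pt \<Rightarrow> pt \<Rightarrow> real" where
  "pd f v p = deriv (\<lambda>s. f (p + s *\<^sub>R v)) 0"

definition C1_fun :: "(pt \<Rightarrow> real) \<Rightarrow> bool" where
  "C1_fun f \<longleftrightarrow> continuous_on UNIV f \<and>
     (\<forall>v\<in>{ex, ey, et}. (\<forall>p. (\<lambda>s. f (p + s *\<^sub>R v)) differentiable (at 0))
        \<and> continuous_on UNIV (pd f v))"

definition C2_fun :: "(pt \<Rightarrow> real) \<Rightarrow> bool" where
  "C2_fun f \<longleftrightarrow> C1_fun f \<and> (\<forall>v\<in>{ex, ey, et}. C1_fun (pd f v))"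

definition C2_real :: "(real \<Rightarrow> real) \<Rightarrow> bool" where
  "C2_real g \<longleftrightarrow> (\<forall>t. g differentiable (at t)) \<and> (\<forall>t. deriv g differentiable (at t))
     \<and> continuous_on UNIV (deriv (deriv g))"

definition periodic_T2 :: "(pt \<Rightarrow> 'a) \<Rightarrow> bool" where
  "periodic_T2 f \<longleftrightarrow> (\<forall>x y t. f (x + 2*pi, y, t) = f (x, y, t) \<and> f (x, y + 2*pi, t) = f (x, y, t))"

definition sdir :: "2 \<Rightarrow> pt" where "sdir i = (if i = 1 then ex else ey)"

definition diag2 :: "real \<Rightarrow> real \<Rightarrow> real^2^2" where
  "diag2 a b = (\<chi> i j. if i = j then (if i = 1 then a else b) else 0)"

definition reg_class :: "real \<Rightarrow> real \<Rightarrow> (pt \<Rightarrow> real^2^2) \<Rightarrow> bool" where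
  "reg_class \<Lambda> C A \<longleftrightarrow>
     (\<forall>p \<xi>. (1/\<Lambda>) * norm \<xi> ^ 2 \<le> \<xi> \<bullet> (A p *v \<xi>) \<and> \<xi> \<bullet> (A p *v \<xi>) \<le> \<Lambda> * norm \<xi> ^ 2)
     \<and> (\<forall>i j. C1_fun (\<lambda>p. A p $ i $ j))
     \<and> (\<forall>i j. \<forall>v\<in>{ex, ey, et}. \<forall>p. \<bar>pd (\<lambda>q. A q $ i $ j) v p\<bar> \<le> C)"

definition solves_eq :: "(pt \<Rightarrow> real^2^2) \<Rightarrow> (pt \<Rightarrow> real) \<Rightarrow> bool" where
  "solves_eq A u \<longleftrightarrow> (\<forall>p. pd (pd u et) et p +
      (\<Sum>i\<in>UNIV. pd (\<lambda>q. \<Sum>j\<in>UNIV. A q $ i $ j * pd u (sdir j) q) (sdir i) p) = 0)"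

end

theory Submission
  imports Defs
begin


lemma deriv_split:
  fixes f g f' g' :: "real \<Rightarrow> real"
  assumes df: "\<And>x. (f has_real_derivative f' x) (at x)"
    and dg: "\<And>x. (g has_real_derivative g' x) (at x)"
    and "f c = g c" "f' c = g' c"
  shows "((\<lambda>x. if x \<le> c then f x else g x) has_real_derivative (if x \<le> c then f' x else g' x)) (at x)"
proof -
  have "((\<lambda>x. if x \<in> {..c} then f x else g x) has_vector_derivative
    (if x \<in> {..c} then f' x else g' x)) (at x within UNIV)"
    apply (rule has_vector_derivative_If_within_closures[where T="{c<..}"])
    using assms
    by (auto simp: has_real_derivative_iff_has_vector_derivative[symmetric]
        intro: has_field_derivative_at_within)
  then show ?thesis
    by (simp add: has_real_derivative_iff_has_vector_derivative)
qed




definition P0 :: "real \<Rightarrow> real" where "P0 s = 20* s^4 - 45* s^5 + 36* s^6 - 10* s^7"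
definition P1 :: "real \<Rightarrow> real" where "P1 s = 80* s^3 - 225* s^4 + 216* s^5 - 70* s^6"
definition P2 :: "real \<Rightarrow> real" where "P2 s = 240* s^2 - 900* s^3 + 1080* s^4 - 420* s^5"
definition P3 :: "real \<Rightarrow> real" where "P3 s = 480* s - 2700* s^2 + 4320* s^3 - 2100* s^4"

lemma dP0: "(P0 has_real_derivative P1 s) (at s)"
  unfolding P0_def P1_def by (auto intro!: derivative_eq_intros simp: field_simps eval_nat_numeral)
lemma dP1: "(P1 has_real_derivative P2 s) (at s)"
  unfolding P2_def P1_def by (auto intro!: derivative_eq_intros simp: field_simps eval_nat_numeral)
lemma dP2: "(P2 has_real_derivative P3 s) (at s)"
  unfolding P2_def P3_def by (auto intro!: derivative_eq_intros simp: field_simps eval_nat_numeral)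

definition H0 :: "real \<Rightarrow> real" where "H0 s = (if s \<le> 0 then 0 else if s \<le> 1 then P0 s else s)"
definition H1 :: "real \<Rightarrow> real" where "H1 s = (if s \<le> 0 then 0 else if s \<le> 1 then P1 s else 1)"
definition H2 :: "real \<Rightarrow> real" where "H2 s = (if s \<le> 0 then 0 else if s \<le> 1 then P2 s else 0)"
definition H3 :: "real \<Rightarrow> real" where "H3 s = (if s \<le> 0 then 0 else if s \<le> 1 then P3 s else 0)"

lemma dH0: "(H0 has_real_derivative H1 s) (at s)"
proof -
  have i: "\<And>x. ((\<lambda>s. if s \<le> 1 then P0 s else s) has_real_derivative (if x \<le> 1 then P1 x else 1)) (at x)"
    by (rule deriv_split[OF dP0]) (auto intro!: derivative_eq_intros simp: P0_def P1_def)
  have "((\<lambda>s. if s \<le> 0 then 0 else (if s \<le> 1 then P0 s else s)) has_real_derivative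
     (if s \<le> 0 then 0 else (if s \<le> 1 then P1 s else 1))) (at s)"
    by (rule deriv_split[OF _ i]) (auto intro: derivative_eq_intros simp: P0_def P1_def)
  then show ?thesis unfolding H0_def[abs_def] H1_def .
qed

lemma dH1: "(H1 has_real_derivative H2 s) (at s)"
proof -
  have i: "\<And>x. ((\<lambda>s. if s \<le> 1 then P1 s else 1) has_real_derivative (if x \<le> 1 then P2 x else 0)) (at x)"
    by (rule deriv_split[OF dP1]) (auto intro!: derivative_eq_intros simp: P1_def P2_def)
  have "((\<lambda>s. if s \<le> 0 then 0 else (if s \<le> 1 then P1 s else 1)) has_real_derivative
     (if s \<le> 0 then 0 else (if s \<le> 1 then P2 s else 0))) (at s)"
    by (rule deriv_split[OF _ i]) (auto intro: derivative_eq_intros simp: P1_def P2_def)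
  then show ?thesis unfolding H1_def[abs_def] H2_def .
qed

lemma dH2: "(H2 has_real_derivative H3 s) (at s)"
proof -
  have i: "\<And>x. ((\<lambda>s. if s \<le> 1 then P2 s else 0) has_real_derivative (if x \<le> 1 then P3 x else 0)) (at x)"
    by (rule deriv_split[OF dP2]) (auto intro!: derivative_eq_intros simp: P3_def P2_def)
  have "((\<lambda>s. if s \<le> 0 then 0 else (if s \<le> 1 then P2 s else 0)) has_real_derivative
     (if s \<le> 0 then 0 else (if s \<le> 1 then P3 s else 0))) (at s)"
    by (rule deriv_split[OF _ i]) (auto intro: derivative_eq_intros simp: P3_def P2_def)
  then show ?thesis unfolding H2_def[abs_def] H3_def .
qed

lemma cH3: "continuous_on UNIV H3"
proof -
  have i: "continuous_on UNIV (\<lambda>s. if s \<le> 1 then P3 s else 0)"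
  proof -
    have "continuous_on ({..1} \<union> {1..}) (\<lambda>s. if s \<le> 1 then P3 s else 0)"
      by (rule continuous_on_cases) (auto simp: P3_def intro!: continuous_intros)
    moreover have "{..1} \<union> {1..} = (UNIV::real set)" by auto
    ultimately show ?thesis by simp
  qed
  have "continuous_on ({..0} \<union> {0..}) (\<lambda>s. if s \<le> 0 then 0 else (if s \<le> 1 then P3 s else 0))"
    by (rule continuous_on_cases) (auto simp: P3_def intro!: continuous_on_subset[OF i])
  moreover have "{..0} \<union> {0..} = (UNIV::real set)" by auto
  ultimately show ?thesis unfolding H3_def[abs_def] by simp
qed




lemma P0_eq: "8 * P0 s = s^4 * (80*(1-s)^3 + 3*(4* s-5)^2 + 5)"
  unfolding P0_def by (simp add: algebra_simps power2_eq_square power3_eq_cube eval_nat_numeral)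
lemma P1_eq: "P1 s = (1 - (1-s)^3*(1+3* s+6* s^2)) + 70*(s*(1-s))^3"
  unfolding P1_def by (simp add: algebra_simps power2_eq_square power3_eq_cube eval_nat_numeral)
lemma P1_eq2: "8 * P1 s = s^3*(3*(4* s-5)^2+5) + 560*(s*(1-s))^3"
  unfolding P1_def by (simp add: algebra_simps power2_eq_square power3_eq_cube eval_nat_numeral)
lemma P2_eq: "P2 s = (s*(1-s))^2 * (240 - 420* s)"
  unfolding P2_def by (simp add: algebra_simps power2_eq_square power3_eq_cube eval_nat_numeral)

lemma sq14: "s*(1-s) \<le> (1/4::real)"
proof -
  have "0 \<le> (2* s-1)^2" by simp
  then show ?thesis by (simp add: algebra_simps power2_eq_square)
qed

lemma H0_nonneg: "H0 s \<ge> 0"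
proof -
  have "0 \<le> s \<Longrightarrow> s \<le> 1 \<Longrightarrow> 0 \<le> 8 * P0 s"
    unfolding P0_eq by (intro mult_nonneg_nonneg add_nonneg_nonneg) auto
  then show ?thesis unfolding H0_def by auto
qed

lemma H1_bounds: "0 \<le> H1 s \<and> H1 s \<le> 21/10"
proof (cases "0 < s \<and> s \<le> 1")
  case True
  then have s: "0 \<le> s" "s \<le> 1" by auto
  have a: "0 \<le> 8 * P1 s"
    unfolding P1_eq2 using s by (intro mult_nonneg_nonneg add_nonneg_nonneg) auto
  have b1: "0 \<le> (1-s)^3*(1+3* s+6* s^2)" using s by (intro mult_nonneg_nonneg add_nonneg_nonneg) auto
  have c0: "0 \<le> s*(1-s)" using s by simp
  have c1: "(s*(1-s))^3 \<le> (1/4)^3" by (rule power_mono[OF sq14 c0])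
  have c2: "(s*(1-s))^3 \<le> 1/64" using c1 by (simp add: power_divide)
  have "P1 s \<le> 21/10" unfolding P1_eq using b1 c2 by linarith
  then show ?thesis using a True unfolding H1_def by auto
qed (auto simp: H1_def)

lemma H2_bound: "\<bar>H2 s\<bar> \<le> 15"
proof (cases "0 < s \<and> s \<le> 1")
  case True
  then have s: "0 \<le> s" "s \<le> 1" by auto
  have c0: "0 \<le> s*(1-s)" using s by simp
  have c1: "(s*(1-s))^2 \<le> (1/4)^2" by (rule power_mono[OF sq14 c0])
  have c2: "\<bar>240 - 420* s\<bar> \<le> 240" using s by auto
  have "\<bar>P2 s\<bar> = (s*(1-s))^2 * \<bar>240 - 420* s\<bar>" unfolding P2_eq by (simp add: abs_mult)
  also have "\<dots> \<le> (1/4)^2 * 240"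
    by (rule mult_mono[OF c1 c2]) auto
  finally have "\<bar>P2 s\<bar> \<le> 15" by (simp add: power_divide)
  then show ?thesis using True unfolding H2_def by auto
qed (auto simp: H2_def)

lemma H3_bound: "\<bar>H3 s\<bar> \<le> 9600"
proof (cases "0 < s \<and> s \<le> 1")
  case True
  then have s: "0 \<le> s" "s \<le> 1" by auto
  have p: "\<And>n. s^n \<le> 1" using s by (simp add: power_le_one)
  have p0: "\<And>n. 0 \<le> s^n" using s by simp
  have "\<bar>P3 s\<bar> \<le> 9600"
    unfolding P3_def using s p0[of 2] p0[of 3] p0[of 4] p[of 2] p[of 3] p[of 4] by linarith
  then show ?thesis using True unfolding H3_def by auto
qed (auto simp: H3_def)




definition pf :: "(real \<Rightarrow> real) \<Rightarrow> (real \<Rightarrow> real) \<Rightarrow> pt \<Rightarrow> real" where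
  "pf p q z = p (snd (snd z)) * q (fst (snd z))"

lemma line_ex: "((\<lambda>s. pf p q (z + s *\<^sub>R ex)) has_real_derivative 0) (at 0)"
proof -
  obtain x y t where z: "z = (x,y,t)" by (cases z) auto
  have e: "(\<lambda>s. pf p q (z + s *\<^sub>R ex)) = (\<lambda>s. p t * q y)" by (auto simp: z pf_def ex_def)
  show ?thesis unfolding e by (rule DERIV_const)
qed

lemma line_ey:
  assumes "\<And>y. (q has_real_derivative q' y) (at y)"
  shows "((\<lambda>s. pf p q (z + s *\<^sub>R ey)) has_real_derivative pf p q' z) (at 0)"
proof -
  obtain x y t where z: "z = (x,y,t)" by (cases z) auto
  have e: "(\<lambda>s. pf p q (z + s *\<^sub>R ey)) = (\<lambda>s. p t * q (y + s))" by (auto simp: z pf_def ey_def)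
  have "((\<lambda>s. q (y + s)) has_real_derivative q' (y+0) * 1) (at 0)"
    by (rule DERIV_chain2[OF assms]) (auto intro!: derivative_eq_intros)
  then have "((\<lambda>s. p t * q (y + s)) has_real_derivative p t * (q' (y+0) * 1)) (at 0)"
    by (rule DERIV_cmult)
  then show ?thesis unfolding e by (simp add: z pf_def)
qed

lemma line_et:
  assumes "\<And>t. (p has_real_derivative p' t) (at t)"
  shows "((\<lambda>s. pf p q (z + s *\<^sub>R et)) has_real_derivative pf p' q z) (at 0)"
proof -
  obtain x y t where z: "z = (x,y,t)" by (cases z) auto
  have e: "(\<lambda>s. pf p q (z + s *\<^sub>R et)) = (\<lambda>s. p (t + s) * q y)" by (auto simp: z pf_def et_def)
  have "((\<lambda>s. p (t + s)) has_real_derivative p' (t+0) * 1) (at 0)"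
    by (rule DERIV_chain2[OF assms]) (auto intro!: derivative_eq_intros)
  then have "((\<lambda>s. p (t + s) * q y) has_real_derivative (p' (t+0) * 1) * q y) (at 0)"
    by (rule DERIV_cmult_right)
  then show ?thesis unfolding e by (simp add: z pf_def)
qed

lemma pd_ex: "pd (pf p q) ex = (\<lambda>_. 0)"
  by (rule ext) (simp add: pd_def DERIV_imp_deriv[OF line_ex])

lemma pd_ey: "(\<And>y. (q has_real_derivative q' y) (at y)) \<Longrightarrow> pd (pf p q) ey = pf p q'"
  by (rule ext) (simp add: pd_def DERIV_imp_deriv[OF line_ey])

lemma pd_et: "(\<And>t. (p has_real_derivative p' t) (at t)) \<Longrightarrow> pd (pf p q) et = pf p' q"
  by (rule ext) (simp add: pd_def DERIV_imp_deriv[OF line_et])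

lemma cont_pf:
  assumes "continuous_on UNIV p" "continuous_on UNIV q"
  shows "continuous_on UNIV (pf p q)"
proof -
  have a: "continuous_on UNIV (\<lambda>z::pt. p (snd (snd z)))"
    by (rule continuous_on_compose2[OF assms(1)]) (auto intro!: continuous_intros)
  have b: "continuous_on UNIV (\<lambda>z::pt. q (fst (snd z)))"
    by (rule continuous_on_compose2[OF assms(2)]) (auto intro!: continuous_intros)
  show ?thesis unfolding pf_def[abs_def] by (intro continuous_on_mult a b)
qed

lemma deriv_cont: "(\<And>t. (p has_real_derivative p' t) (at t)) \<Longrightarrow> continuous_on UNIV p"
  by (intro continuous_at_imp_continuous_on) (auto intro: DERIV_isCont)

lemma C1_pf:
  assumes dp: "\<And>t. (p has_real_derivative p' t) (at t)" and cp: "continuous_on UNIV p'"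
    and dq: "\<And>t. (q has_real_derivative q' t) (at t)" and cq: "continuous_on UNIV q'"
  shows "C1_fun (pf p q)"
proof -
  have p: "continuous_on UNIV p" by (rule deriv_cont[OF dp])
  have q: "continuous_on UNIV q" by (rule deriv_cont[OF dq])
  show ?thesis
    unfolding C1_fun_def
    using cont_pf[OF p q] cont_pf[OF p cq] cont_pf[OF cp q]
    by (auto simp: pd_ex pd_ey[OF dq] pd_et[OF dp] real_differentiable_def
        intro: line_ex line_ey[OF dq] line_et[OF dp])
qed




lemma dH0c: "(f has_real_derivative f') (at x) \<Longrightarrow> ((\<lambda>x. H0 (f x)) has_real_derivative H1 (f x) * f') (at x)"
  by (rule DERIV_chain2[OF dH0])
lemma dH1c: "(f has_real_derivative f') (at x) \<Longrightarrow> ((\<lambda>x. H1 (f x)) has_real_derivative H2 (f x) * f') (at x)"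
  by (rule DERIV_chain2[OF dH1])
lemma dH2c: "(f has_real_derivative f') (at x) \<Longrightarrow> ((\<lambda>x. H2 (f x)) has_real_derivative H3 (f x) * f') (at x)"
  by (rule DERIV_chain2[OF dH2])

locale constr =
  fixes kk c1 c2 b0 b1 t1 a :: real
  assumes kk: "kk \<ge> 1000" and kint: "kk \<in> \<int>"
    and b0: "b0^2 > 1/10" "0 \<le> b0" and b1: "b1^2 < 10" "b0 \<le> b1"
    and a: "1/10 < a" "a < 10" and c1: "c1 > 0"
    and c2: "c1 * exp (- kk * b0 * t1) = c2 * exp (- kk * b1 * t1)"
begin

definition "sv t = (t - t1)/400"
definition "Phi t = b0*t + 400*(b1-b0)*H0 (sv t)"
definition "Phi1 t = b0 + (b1-b0)*H1 (sv t)"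
definition "Phi2 t = (b1-b0)*H2 (sv t)/400"
definition "Phi3 t = (b1-b0)*H3 (sv t)/160000"
definition "gg t = c1 * exp (- kk * Phi t)"
definition "gg1 t = - kk * Phi1 t * gg t"
definition "gg2 t = (kk^2 * (Phi1 t)^2 - kk * Phi2 t) * gg t"
definition "bet t = (Phi1 t)^2 - Phi2 t / kk"
definition "bet1 t = 2 * Phi1 t * Phi2 t - Phi3 t / kk"

lemma knz: "kk \<noteq> 0" using kk by auto

lemma dsv: "(sv has_real_derivative 1/400) (at t)"
  unfolding sv_def[abs_def] by (auto intro!: derivative_eq_intros)

lemma dPhi: "(Phi has_real_derivative Phi1 t) (at t)"
  unfolding Phi_def[abs_def] Phi1_def
  by (auto intro!: derivative_eq_intros dH0c[OF dsv])
lemma dPhi1: "(Phi1 has_real_derivative Phi2 t) (at t)"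
  unfolding Phi1_def[abs_def] Phi2_def
  by (auto intro!: derivative_eq_intros dH1c[OF dsv])
lemma dPhi2: "(Phi2 has_real_derivative Phi3 t) (at t)"
  unfolding Phi2_def[abs_def] Phi3_def
  by (auto intro!: derivative_eq_intros dH2c[OF dsv])
lemma cPhi3: "continuous_on UNIV Phi3"
proof -
  have "continuous_on UNIV (\<lambda>t. H3 (sv t))"
    by (rule continuous_on_compose2[OF cH3]) (auto simp: sv_def intro!: continuous_intros)
  then show ?thesis unfolding Phi3_def[abs_def] by (auto intro!: continuous_intros)
qed
lemma cPhi: "continuous_on UNIV Phi" "continuous_on UNIV Phi1" "continuous_on UNIV Phi2"
  by (auto intro: deriv_cont dPhi dPhi1 dPhi2)

lemma dgg: "(gg has_real_derivative gg1 t) (at t)"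
  unfolding gg_def[abs_def] gg1_def
  by (auto intro!: derivative_eq_intros dPhi)
lemma dgg1: "(gg1 has_real_derivative gg2 t) (at t)"
  unfolding gg1_def[abs_def] gg2_def
  by (auto intro!: derivative_eq_intros dPhi dPhi1 dgg simp: gg1_def power2_eq_square algebra_simps)
lemma dbet: "(bet has_real_derivative bet1 t) (at t)"
  unfolding bet_def[abs_def] bet1_def
  by (auto intro!: derivative_eq_intros dPhi1 dPhi2 simp: power2_eq_square algebra_simps knz)

lemma cgg: "continuous_on UNIV gg" "continuous_on UNIV gg1" "continuous_on UNIV gg2"
  "continuous_on UNIV bet1"
  using cPhi cPhi3 deriv_cont[OF dgg] unfolding gg1_def[abs_def] gg2_def[abs_def] bet1_def[abs_def]
  by (auto intro!: continuous_intros simp: knz)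


lemma b1lt: "b1 < 317/100"
proof (rule ccontr)
  assume "\<not> b1 < 317/100"
  then have "(317/100)^2 \<le> b1^2" by (intro power_mono) auto
  then show False using b1 by (simp add: power2_eq_square)
qed

lemma dd: "0 \<le> b1 - b0" "b1 - b0 < 317/100" using b0 b1 b1lt by auto

lemma Phi1_bnd: "b0 \<le> Phi1 t \<and> Phi1 t \<le> 67/10"
proof -
  have h: "0 \<le> H1 (sv t)" "H1 (sv t) \<le> 21/10" using H1_bounds by auto
  have l: "b0 \<le> Phi1 t" unfolding Phi1_def using h dd by simp
  have "Phi1 t \<le> 67/10"
  proof (cases "H1 (sv t) \<le> 1")
    case True
    have "(b1-b0) * H1 (sv t) \<le> (b1-b0) * 1" by (rule mult_left_mono[OF True dd(1)])
    then show ?thesis unfolding Phi1_def using b1lt by simp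
  next
    case False
    have e: "Phi1 t = b0 * (1 - H1 (sv t)) + b1 * H1 (sv t)" unfolding Phi1_def by (simp add: algebra_simps)
    have x: "b0 * (1 - H1 (sv t)) \<le> 0" using False b0 by (intro mult_nonneg_nonpos) auto
    have y: "b1 * H1 (sv t) \<le> (317/100) * (21/10)" using b1lt h b0 b1 by (intro mult_mono) auto
    show ?thesis using e x y by simp
  qed
  then show ?thesis using l by simp
qed

lemma Phi2_bnd: "\<bar>Phi2 t\<bar> \<le> 1/8"
proof -
  have "\<bar>b1-b0\<bar> * \<bar>H2 (sv t)\<bar> \<le> (317/100) * 15"
    using dd H2_bound by (intro mult_mono) auto
  then show ?thesis unfolding Phi2_def by (simp add: abs_mult)
qed

lemma Phi3_bnd: "\<bar>Phi3 t\<bar> \<le> 1/5"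
proof -
  have "\<bar>b1-b0\<bar> * \<bar>H3 (sv t)\<bar> \<le> (317/100) * 9600"
    using dd H3_bound by (intro mult_mono) auto
  then show ?thesis unfolding Phi3_def by (simp add: abs_mult)
qed

lemma divk: "\<bar>x / kk\<bar> \<le> \<bar>x\<bar> / 1000"
proof -
  have "\<bar>x / kk\<bar> = \<bar>x\<bar> / kk" using kk by simp
  also have "\<dots> \<le> \<bar>x\<bar> / 1000" using kk by (intro divide_left_mono) auto
  finally show ?thesis .
qed

lemma bet_bnd: "1/80 \<le> bet t \<and> bet t \<le> 80"
proof -
  have p: "b0 \<le> Phi1 t" "Phi1 t \<le> 67/10" using Phi1_bnd by auto
  have l: "b0^2 \<le> (Phi1 t)^2" using p b0 by (intro power_mono) auto
  have u: "(Phi1 t)^2 \<le> (67/10)^2" using p b0 by (intro power_mono) auto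
  have q: "\<bar>Phi2 t / kk\<bar> \<le> 1/8000" using divk[of "Phi2 t"] Phi2_bnd[of t] by linarith
  have u2: "(67/10::real)^2 = 4489/100" by (simp add: power2_eq_square)
  have q2: "- (1/8000) \<le> Phi2 t / kk \<and> Phi2 t / kk \<le> 1/8000" using q by linarith
  show ?thesis unfolding bet_def using l u u2 q2 b0(1) by linarith
qed

lemma bet1_bnd: "\<bar>bet1 t\<bar> \<le> 10"
proof -
  have p: "b0 \<le> Phi1 t" "Phi1 t \<le> 67/10" using Phi1_bnd by auto
  have m: "\<bar>Phi1 t\<bar> * \<bar>Phi2 t\<bar> \<le> (67/10) * (1/8)" using p b0 Phi2_bnd by (intro mult_mono) auto
  have q: "\<bar>Phi3 t / kk\<bar> \<le> 1/5000" using divk[of "Phi3 t"] Phi3_bnd[of t] by linarith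
  have m2: "\<bar>Phi1 t * Phi2 t\<bar> \<le> 67/80" using m by (simp add: abs_mult)
  have m3: "- (67/80) \<le> Phi1 t * Phi2 t \<and> Phi1 t * Phi2 t \<le> 67/80" using m2 by linarith
  have q2: "- (1/5000) \<le> Phi3 t / kk \<and> Phi3 t / kk \<le> 1/5000" using q by linarith
  have e: "bet1 t = 2 * (Phi1 t * Phi2 t) - Phi3 t / kk" unfolding bet1_def by simp
  show ?thesis unfolding e using m3 q2 by linarith
qed

lemma Phi_ge: "b0 * t \<le> Phi t"
  unfolding Phi_def using dd H0_nonneg by simp

lemma gg_pos: "0 < gg t" unfolding gg_def using c1 by simp

lemma gg_le: "gg t \<le> c1 * exp (- kk * b0 * t)"
proof -
  have "- kk * Phi t \<le> - kk * (b0 * t)" using Phi_ge kk by (intro mult_left_mono_neg) auto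
  then show ?thesis unfolding gg_def using c1 by simp
qed

lemma gg2_eq: "gg2 t = kk^2 * bet t * gg t"
  unfolding gg2_def bet_def using knz by (simp add: field_simps power2_eq_square)

lemma left_vals: assumes "t \<le> t1"
  shows "Phi t = b0 * t" "Phi1 t = b0" "Phi2 t = 0" "bet t = b0^2" "gg t = c1 * exp (- kk * b0 * t)"
proof -
  have s: "sv t \<le> 0" using assms unfolding sv_def by simp
  show "Phi t = b0 * t" "Phi1 t = b0" "Phi2 t = 0"
    unfolding Phi_def Phi1_def Phi2_def using s by (auto simp: H0_def H1_def H2_def)
  then show "bet t = b0^2" "gg t = c1 * exp (- kk * b0 * t)"
    unfolding bet_def gg_def by auto
qed

lemma right_vals: assumes "t \<ge> t1 + 400"
  shows "Phi t = b1 * t - (b1 - b0) * t1" "Phi1 t = b1" "Phi2 t = 0" "bet t = b1^2"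
    "gg t = c2 * exp (- kk * b1 * t)"
proof -
  have s: "sv t \<ge> 1" using assms unfolding sv_def by simp
  have h0: "H0 (sv t) = sv t" using s by (auto simp: H0_def P0_def)
  have h1: "H1 (sv t) = 1" using s by (auto simp: H1_def P1_def)
  have h2: "H2 (sv t) = 0" using s by (auto simp: H2_def P2_def)
  show P: "Phi t = b1 * t - (b1 - b0) * t1"
    unfolding Phi_def h0 unfolding sv_def by (simp add: field_simps)
  show "Phi1 t = b1" "Phi2 t = 0"
    unfolding Phi1_def Phi2_def h1 h2 by auto
  then show "bet t = b1^2" unfolding bet_def by auto
  have c2e: "c2 = c1 * exp (kk * (b1 - b0) * t1)"
  proof -
    have "c2 = c1 * exp (- kk * b0 * t1) / exp (- kk * b1 * t1)" using c2 by simp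
    also have "\<dots> = c1 * exp (- kk * b0 * t1 - (- kk * b1 * t1))" by (simp only: exp_diff times_divide_eq_right)
    finally show ?thesis by (simp add: algebra_simps)
  qed
  have "gg t = c1 * exp (kk * (b1 - b0) * t1 + (- kk * b1 * t))"
    unfolding gg_def P by (simp add: algebra_simps)
  also have "\<dots> = c2 * exp (- kk * b1 * t)" unfolding c2e by (simp only: exp_add mult.assoc)
  finally show "gg t = c2 * exp (- kk * b1 * t)" .
qed

end



lemma quad_diag: "\<xi> \<bullet> (diag2 a c *v \<xi>) = a * (\<xi>$1)^2 + c * (\<xi>$2)^2"
  by (simp add: diag2_def inner_vec_def matrix_vector_mult_def sum_2 power2_eq_square)

lemma norm2_2: "(norm (\<xi>::real^2))^2 = (\<xi>$1)^2 + (\<xi>$2)^2"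
  by (simp only: power2_norm_eq_inner) (simp add: inner_vec_def sum_2 power2_eq_square)

lemma const_pf: "(\<lambda>_::pt. 0::real) = pf (\<lambda>_. 0) (\<lambda>_. 0)"
  by (rule ext) (simp add: pf_def)

lemma C1_zero: "C1_fun (\<lambda>_::pt. 0::real)"
  unfolding const_pf by (rule C1_pf) (auto intro: DERIV_const)

context constr begin

lemma construction:
  "\<exists>(u :: pt \<Rightarrow> real) (A :: pt \<Rightarrow> real^2^2).
   C2_fun u \<and> periodic_T2 u \<and> periodic_T2 A \<and> reg_class 80 10 A \<and> solves_eq A u \<and>
   (\<forall>x y t. t \<le> t1 \<longrightarrow> u (x,y,t) = c1 * (cos (kk*y) * exp (- kk * b0 * t)) \<and> A (x,y,t) = diag2 a (b0^2)) \<and>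
   (\<forall>x y t. t \<ge> t1+400 \<longrightarrow> u (x,y,t) = c2 * (cos (kk*y) * exp (- kk * b1 * t)) \<and> A (x,y,t) = diag2 a (b1^2)) \<and>
   (\<exists>g. C2_real g \<and> (\<forall>x y t. t \<in> {t1..t1+400} \<longrightarrow> u (x,y,t) = g t * cos (kk*y)) \<and>
     (\<forall>\<alpha>::nat. \<forall>t. \<alpha> \<le> 2 \<longrightarrow> t \<in> {t1..t1+400} \<longrightarrow>
        \<bar>(deriv ^^ \<alpha>) g t\<bar> \<le> 100 * c1 * kk ^ \<alpha> * exp (- kk * b0 * t)))"
proof -
  define q where "q = (\<lambda>y. cos (kk*y))"
  define q1 where "q1 = (\<lambda>y. - (kk * sin (kk*y)))"
  define q2 where "q2 = (\<lambda>y. - (kk * (kk * cos (kk*y))))"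
  have dq: "\<And>y. (q has_real_derivative q1 y) (at y)"
    unfolding q_def q1_def by (auto intro!: derivative_eq_intros)
  have dq1: "\<And>y. (q1 has_real_derivative q2 y) (at y)"
    unfolding q2_def q1_def by (auto intro!: derivative_eq_intros)
  have cq1: "continuous_on UNIV q1" "continuous_on UNIV q2"
    unfolding q2_def q1_def by (auto intro!: continuous_intros)
  define u where "u = pf gg q"
  define A where "A = (\<lambda>z::pt. diag2 a (bet (snd (snd z))))"
  define E where "E = (\<lambda>(i::2) (j::2) t. if i = j then (if i = 1 then a else bet t) else 0)"
  define E1 where "E1 = (\<lambda>(i::2) (j::2) t. if i = j then (if i = 1 then 0 else bet1 t) else 0)"
  have Aent: "\<And>i j. (\<lambda>z. A z $ i $ j) = pf (E i j) (\<lambda>_. 1)"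
    by (rule ext) (simp add: A_def diag2_def E_def pf_def)
  have dE: "\<And>i j t. (E i j has_real_derivative E1 i j t) (at t)"
    unfolding E_def E1_def by (auto intro: dbet DERIV_const)
  have cE: "continuous_on UNIV (E1 i j)" for i j
    unfolding E1_def using cgg(4) by (cases "i = j"; cases "i = 1") auto
  have pdu: "pd u ex = (\<lambda>_. 0)" "pd u ey = pf gg q1" "pd u et = pf gg1 q"
    unfolding u_def using pd_ex pd_ey[OF dq] pd_et[OF dgg] by auto
  have C1u: "C1_fun u" unfolding u_def by (rule C1_pf[OF dgg cgg(2) dq cq1(1)])
  have C2: "C2_fun u"
    unfolding C2_fun_def
    using C1u C1_pf[OF dgg cgg(2) dq1 cq1(2)] C1_pf[OF dgg1 cgg(3) dq cq1(1)]
      C1_zero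
    by (auto simp: pdu)
  have perU: "periodic_T2 u"
  proof -
    obtain n where n: "kk = of_int n" using kint Ints_cases by blast
    have "\<And>y. cos (kk * (y + 2*pi)) = cos (kk * y)"
    proof -
      fix y
      have "kk * (y + 2*pi) = kk * y + (2*pi) * of_int n" by (simp add: n algebra_simps)
      then show "cos (kk * (y + 2*pi)) = cos (kk * y)" by (simp add: cos_add)
    qed
    then show ?thesis unfolding periodic_T2_def u_def pf_def q_def by simp
  qed
  have perA: "periodic_T2 A" unfolding periodic_T2_def A_def by simp
  have ell: "\<And>p \<xi>. (1/80) * norm \<xi> ^ 2 \<le> \<xi> \<bullet> (A p *v \<xi>) \<and> \<xi> \<bullet> (A p *v \<xi>) \<le> 80 * norm \<xi> ^ 2"
  proof -
    fix p :: pt and \<xi> :: "real^2"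
    let ?b = "bet (snd (snd p))"
    have bb: "1/80 \<le> ?b" "?b \<le> 80" using bet_bnd by auto
    have s1: "0 \<le> (\<xi>$1)^2" "0 \<le> (\<xi>$2)^2" by auto
    have m1: "(1/80) * (\<xi>$1)^2 \<le> a * (\<xi>$1)^2" "a * (\<xi>$1)^2 \<le> 80 * (\<xi>$1)^2"
      by (rule mult_right_mono, use a s1 in auto)+
    have m2: "(1/80) * (\<xi>$2)^2 \<le> ?b * (\<xi>$2)^2" "?b * (\<xi>$2)^2 \<le> 80 * (\<xi>$2)^2"
      by (rule mult_right_mono, use bb s1 in auto)+
    show "(1/80) * norm \<xi> ^ 2 \<le> \<xi> \<bullet> (A p *v \<xi>) \<and> \<xi> \<bullet> (A p *v \<xi>) \<le> 80 * norm \<xi> ^ 2"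
      unfolding A_def quad_diag norm2_2 using m1 m2 by (simp add: algebra_simps)
  qed
  have C1A: "\<And>i j. C1_fun (\<lambda>p. A p $ i $ j)"
    unfolding Aent by (rule C1_pf[OF dE cE]) (auto intro: DERIV_const)
  have pdA: "\<And>i j v p. v \<in> {ex, ey, et} \<Longrightarrow> \<bar>pd (\<lambda>q. A q $ i $ j) v p\<bar> \<le> 10"
  proof -
    fix i j v p assume v: "v \<in> {ex, ey, et}"
    have "pd (\<lambda>q. A q $ i $ j) et p = E1 i j (snd (snd p))"
      unfolding Aent pd_et[OF dE] by (simp add: pf_def)
    moreover have "\<bar>E1 i j t\<bar> \<le> 10" for t unfolding E1_def using bet1_bnd[of t] by auto
    moreover have "pd (\<lambda>q. A q $ i $ j) ey p = 0"
      unfolding Aent pd_ey[OF DERIV_const] by (simp add: pf_def)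
    moreover have "pd (\<lambda>q. A q $ i $ j) ex p = 0"
      unfolding Aent pd_ex by simp
    ultimately show "\<bar>pd (\<lambda>q. A q $ i $ j) v p\<bar> \<le> 10" using v by auto
  qed
  have reg: "reg_class 80 10 A"
    unfolding reg_class_def using ell C1A pdA by blast
  have solv: "solves_eq A u"
  proof -
    have i1: "(\<lambda>q. \<Sum>j\<in>UNIV. A q $ 1 $ j * pd u (sdir j) q) = pf (\<lambda>_. 0) (\<lambda>_. 0)"
      by (rule ext) (simp add: sum_2 sdir_def pdu A_def diag2_def pf_def)
    have i2: "(\<lambda>q. \<Sum>j\<in>UNIV. A q $ 2 $ j * pd u (sdir j) q) = pf (\<lambda>t. bet t * gg t) q1"
      by (rule ext) (simp add: sum_2 sdir_def pdu A_def diag2_def pf_def)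
    have uu: "pd (pd u et) et = pf gg2 q" unfolding pdu pd_et[OF dgg1] ..
    show ?thesis
      unfolding solves_eq_def
    proof
      fix p :: pt
      define F where "F i = pd (\<lambda>q. \<Sum>j\<in>UNIV. A q $ i $ j * pd u (sdir j) q) (sdir i) p" for i
      have F1: "F 1 = 0" unfolding F_def i1 by (simp add: sdir_def pd_ex)
      have F2: "F 2 = pf (\<lambda>t. bet t * gg t) q2 p" unfolding F_def i2 by (simp add: sdir_def pd_ey[OF dq1])
      have S: "(\<Sum>i\<in>UNIV. pd (\<lambda>q. \<Sum>j\<in>UNIV. A q $ i $ j * pd u (sdir j) q) (sdir i) p) = F 1 + F 2"
        unfolding F_def by (rule sum_2)
      show "pd (pd u et) et p + (\<Sum>i\<in>UNIV. pd (\<lambda>q. \<Sum>j\<in>UNIV. A q $ i $ j * pd u (sdir j) q) (sdir i) p) = 0"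
        unfolding S F1 F2 uu
        by (simp add: pf_def gg2_eq q_def q2_def algebra_simps power2_eq_square)
    qed
  qed
  have dgg_eq: "deriv gg = gg1" by (rule ext) (rule DERIV_imp_deriv[OF dgg])
  have dgg1_eq: "deriv gg1 = gg2" by (rule ext) (rule DERIV_imp_deriv[OF dgg1])
  have C2g: "C2_real gg"
    unfolding C2_real_def dgg_eq dgg1_eq using dgg dgg1 cgg(3)
    by (auto simp: real_differentiable_def)
  have bnd: "\<bar>(deriv ^^ \<alpha>) gg t\<bar> \<le> 100 * c1 * kk ^ \<alpha> * exp (- kk * b0 * t)"
    if "\<alpha> \<le> 2" for \<alpha> t
  proof -
    let ?X = "c1 * exp (- kk * b0 * t)"
    have X: "0 < ?X" using c1 by simp
    have g: "0 < gg t" "gg t \<le> ?X" using gg_pos gg_le by auto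
    have k0: "0 \<le> kk" using kk by simp
    have "\<alpha> = 0 \<or> \<alpha> = 1 \<or> \<alpha> = 2" using that by auto
    moreover have "\<bar>gg t\<bar> \<le> 100 * c1 * kk ^ 0 * exp (- kk * b0 * t)" using g X by simp
    moreover have "\<bar>gg1 t\<bar> \<le> 100 * c1 * kk ^ 1 * exp (- kk * b0 * t)"
    proof -
      have p: "0 \<le> Phi1 t" "Phi1 t \<le> 100" using Phi1_bnd[of t] b0 by auto
      have "\<bar>gg1 t\<bar> = kk * (Phi1 t * gg t)" unfolding gg1_def using p g k0 by (simp add: abs_mult)
      also have "\<dots> \<le> kk * (100 * ?X)"
        using p g k0 by (intro mult_left_mono mult_mono) auto
      finally show ?thesis by (simp add: algebra_simps)
    qed
    moreover have "\<bar>gg2 t\<bar> \<le> 100 * c1 * kk ^ 2 * exp (- kk * b0 * t)"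
    proof -
      have p: "0 \<le> bet t" "bet t \<le> 100" using bet_bnd[of t] by auto
      have "\<bar>gg2 t\<bar> = kk^2 * (bet t * gg t)" unfolding gg2_eq using p g k0 by (simp add: abs_mult)
      also have "\<dots> \<le> kk^2 * (100 * ?X)"
        using p g k0 by (intro mult_left_mono mult_mono) auto
      finally show ?thesis by (simp add: algebra_simps)
    qed
    ultimately show ?thesis by (auto simp: dgg_eq dgg1_eq numeral_2_eq_2)
  qed
  have left: "\<forall>x y t. t \<le> t1 \<longrightarrow> u (x,y,t) = c1 * (cos (kk*y) * exp (- kk * b0 * t)) \<and> A (x,y,t) = diag2 a (b0^2)"
    using left_vals by (simp add: u_def A_def pf_def q_def)
  have right: "\<forall>x y t. t \<ge> t1+400 \<longrightarrow> u (x,y,t) = c2 * (cos (kk*y) * exp (- kk * b1 * t)) \<and> A (x,y,t) = diag2 a (b1^2)"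
    using right_vals by (simp add: u_def A_def pf_def q_def)
  have mid: "\<forall>x y t. t \<in> {t1..t1+400} \<longrightarrow> u (x,y,t) = gg t * cos (kk*y)"
    by (simp add: u_def pf_def q_def)
  show ?thesis
    apply (rule exI[of _ u], rule exI[of _ A])
    using C2 perU perA reg solv left right mid C2g bnd by blast
qed

end


theorem mainTheorem12:
  shows "\<exists>K M :: real. \<forall>k :: int. \<forall>a b b' t1 c1 :: real.
    real_of_int k \<ge> K \<longrightarrow> a \<in> {1/10<..<10} \<longrightarrow> b \<in> {1/10<..<10} \<longrightarrow> b' \<in> {1/10<..<10}
    \<longrightarrow> b \<le> b' \<longrightarrow> t1 \<ge> 0 \<longrightarrow> c1 > 0 \<longrightarrow>
    (\<forall>c2 :: real. c2 > 0 \<longrightarrow> c1 * exp (- real_of_int k * sqrt b * t1) = c2 * exp (- real_of_int k * sqrt b' * t1) \<longrightarrow>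
      (\<exists>(u :: pt \<Rightarrow> real) (A :: pt \<Rightarrow> real^2^2).
         C2_fun u \<and> periodic_T2 u \<and> periodic_T2 A \<and> reg_class 80 10 A \<and> solves_eq A u \<and>
         (\<forall>(x::real) (y::real) (t::real). t \<le> t1 \<longrightarrow> u (x, y, t) = c1 * (cos (real_of_int k * y) * exp (- real_of_int k * sqrt b * t))
                               \<and> A (x, y, t) = diag2 a b) \<and>
         (\<forall>(x::real) (y::real) (t::real). t \<ge> t1 + 400 \<longrightarrow> u (x, y, t) = c2 * (cos (real_of_int k * y) * exp (- real_of_int k * sqrt b' * t))
                               \<and> A (x, y, t) = diag2 a b') \<and>
         (\<exists>g :: real \<Rightarrow> real. C2_real g \<and>
            (\<forall>(x::real) (y::real) (t::real). t \<in> {t1..t1+400} \<longrightarrow> u (x, y, t) = g t * cos (real_of_int k * y)) \<and>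
            (\<forall>\<alpha>::nat. \<forall>t. \<alpha> \<le> 2 \<longrightarrow> t \<in> {t1..t1+400} \<longrightarrow>
               \<bar>(deriv ^^ \<alpha>) g t\<bar> \<le> M * c1 * real_of_int k ^ \<alpha> * exp (- real_of_int k * sqrt b * t)))))"
  proof (rule exI[of _ 1000], rule exI[of _ 100], intro allI impI)
  fix k :: int and a b b' t1 c1 c2 :: real
  assume k: "real_of_int k \<ge> 1000" and a: "a \<in> {1/10<..<10}" and b: "b \<in> {1/10<..<10}"
    and b': "b' \<in> {1/10<..<10}" and bb: "b \<le> b'" and t1: "t1 \<ge> 0" and c1: "c1 > 0"
    and c2: "c2 > 0" and ce: "c1 * exp (- real_of_int k * sqrt b * t1) = c2 * exp (- real_of_int k * sqrt b' * t1)"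
  have bs: "(sqrt b)^2 = b" "(sqrt b')^2 = b'" using b b' by auto
  interpret constr "real_of_int k" c1 c2 "sqrt b" "sqrt b'" t1 a
    by unfold_locales (use k a b b' bb c1 ce bs in \<open>auto simp: real_sqrt_le_mono\<close>)
  show "\<exists>(u :: pt \<Rightarrow> real) (A :: pt \<Rightarrow> real^2^2).
         C2_fun u \<and> periodic_T2 u \<and> periodic_T2 A \<and> reg_class 80 10 A \<and> solves_eq A u \<and>
         (\<forall>(x::real) (y::real) (t::real). t \<le> t1 \<longrightarrow> u (x, y, t) = c1 * (cos (real_of_int k * y) * exp (- real_of_int k * sqrt b * t))
                               \<and> A (x, y, t) = diag2 a b) \<and>
         (\<forall>(x::real) (y::real) (t::real). t \<ge> t1 + 400 \<longrightarrow> u (x, y, t) = c2 * (cos (real_of_int k * y) * exp (- real_of_int k * sqrt b' * t))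
                               \<and> A (x, y, t) = diag2 a b') \<and>
         (\<exists>g :: real \<Rightarrow> real. C2_real g \<and>
            (\<forall>(x::real) (y::real) (t::real). t \<in> {t1..t1+400} \<longrightarrow> u (x, y, t) = g t * cos (real_of_int k * y)) \<and>
            (\<forall>\<alpha>::nat. \<forall>t. \<alpha> \<le> 2 \<longrightarrow> t \<in> {t1..t1+400} \<longrightarrow>
               \<bar>(deriv ^^ \<alpha>) g t\<bar> \<le> 100 * c1 * real_of_int k ^ \<alpha> * exp (- real_of_int k * sqrt b * t)))"
    using construction[unfolded bs] by simp
qed

end
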